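(* In the setting below, fix a test query $\mathbf q\in\mathbb{R}^d$, a stopping step $\hat N\ge1$ and two tokens $h,h'\in\mathcal H$. Suppose that there exist a vector $\boldsymbol\mu^{(0)}$ (the common initialization, $\boldsymbol\mu^{(0)}_g=\boldsymbol\mu^{(0)}$ for all $g$), vectors $\mathbf r_h,\mathbf r_{h'}$ and $\xi\ge0$ with $\|\mathbf r_h\|,\|\mathbf r_{h'}\|\le\xi$ such that $$\mathbb E\big[\boldsymbol\mu^{(\hat N)}_g\big]=\boldsymbol\mu^{(0)}+\frac{\eta\hat N p_g}{\sqrt d}(\mathbf w_g-\bar{\mathbf w})+\mathbf r_g\qquad (g\in\{h,h'\}).$$ Define $$\mathrm{AR}(h,h')=\frac{\mathbb E\big[M_h(\mathbf q;\boldsymbol\mu^{(\hat N)})/M_{h'}(\mathbf q;\boldsymbol\mu^{(\hat N)})\big]}{p_h/p_{h'}},$$ the expectation being over the training randomness. Then $$\mathrm{AR}(h,h')\ \ge\ \exp\Big(\frac{\eta\hat N}{d}\big\langle\mathbf q,\ p_h(\mathbf w_h-\bar{\mathbf w})-p_{h'}(\mathbf w_{h'}-\bar{\mathbf w})\big\rangle-\frac{2\xi\|\mathbf q\|}{\sqrt d}\Big).$$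
   Context: Let $\mathcal H$ be a finite set of tokens and $T\ge1$. Each history position $j\in[T]$ carries a token $h_j\in\mathcal H$; let $S_h=\{j\in[T]:h_j=h\}$, assume $|S_h|\ge1$ for all $h$, and let $p_h=|S_h|/T$. Each token $h$ has a key parameter $\boldsymbol\mu_h\in\mathbb{R}^d$, and the token exposure for a query $\mathbf q\in\mathbb{R}^d$ is $M_h(\mathbf q;\boldsymbol\mu)=\frac{|S_h|\exp(\langle\mathbf q,\boldsymbol\mu_h\rangle/\sqrt d)}{\sum_{h''\in\mathcal H}|S_{h''}|\exp(\langle\mathbf q,\boldsymbol\mu_{h''}\rangle/\sqrt d)}$. Training pairs $(\mathbf q^{(n)},X^{(n)})_{n\ge0}$ are i.i.d., with $\|\mathbf q^{(n)}\|\le B_q$ almost surely, $\Pr(X^{(n)}=h)=p_h$, $\mathbf w_h=\mathbb E[\mathbf q^{(n)}\mid X^{(n)}=h]$ and $\bar{\mathbf w}=\sum_h p_h\mathbf w_h$. The parameters $\boldsymbol\mu^{(n)}$ are produced by SGD with learning rate $\eta>0$ on the loss $-\log M_{X^{(n)}}(\mathbf q^{(n)};\boldsymbol\mu^{(n)})$, starting from a common initialization; $\boldsymbol\mu^{(\hat N)}$ is the (random) iterate at step $\hat N$. *)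

theory Defs
  imports "HOL-Probability.Probability"
begin

text \<open>Vectors in R^d are modelled as real^'d, with d = CARD('d).
  Tokens form a finite type 'h. The history is hist :: nat => 'h on positions 1..T.\<close>

definition token_count :: "(nat \<Rightarrow> 'h) \<Rightarrow> nat \<Rightarrow> 'h \<Rightarrow> nat" where
  "token_count hist T g = card {j \<in> {1..T}. hist j = g}"

definition token_freq :: "(nat \<Rightarrow> 'h) \<Rightarrow> nat \<Rightarrow> 'h \<Rightarrow> real" where
  "token_freq hist T g = real (token_count hist T g) / real T"

text \<open>Token exposure M_h(q; mu), with c g = |S_g|.\<close>
definition exposure :: "('h::finite \<Rightarrow> nat) \<Rightarrow> real^'d \<Rightarrow> ('h \<Rightarrow> real^'d) \<Rightarrow> 'h \<Rightarrow> real" where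
  "exposure c q mu g =
     real (c g) * exp ((q \<bullet> mu g) / sqrt (real CARD('d))) /
     (\<Sum>g''\<in>UNIV. real (c g'') * exp ((q \<bullet> mu g'') / sqrt (real CARD('d))))"

text \<open>One SGD step with learning rate eta on the loss -log M_x(q; mu).
  The gradient of this loss w.r.t. mu_g is -(1/sqrt d) ([g = x] - M_g(q;mu)) q.\<close>
definition sgd_step :: "real \<Rightarrow> ('h::finite \<Rightarrow> nat) \<Rightarrow> ('h \<Rightarrow> real^'d) \<Rightarrow> real^'d \<Rightarrow> 'h
    \<Rightarrow> ('h \<Rightarrow> real^'d)" where
  "sgd_step eta c mu q x = (\<lambda>g. mu g - eta *\<^sub>R
      (- ((1 / sqrt (real CARD('d))) * ((if g = x then 1 else 0) - exposure c q mu g)) *\<^sub>R q))"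

fun sgd_iter :: "real \<Rightarrow> ('h::finite \<Rightarrow> nat) \<Rightarrow> ('h \<Rightarrow> real^'d) \<Rightarrow> (nat \<Rightarrow> real^'d)
    \<Rightarrow> (nat \<Rightarrow> 'h) \<Rightarrow> nat \<Rightarrow> ('h \<Rightarrow> real^'d)" where
  "sgd_iter eta c mu0 qs xs 0 = mu0"
| "sgd_iter eta c mu0 qs xs (Suc n) = sgd_step eta c (sgd_iter eta c mu0 qs xs n) (qs n) (xs n)"

text \<open>w_g = E[q | X = g] (computed from the pair at step 0; all pairs are identically distributed).\<close>
definition cond_mean :: "'w measure \<Rightarrow> ('w \<Rightarrow> real^'d) \<Rightarrow> ('w \<Rightarrow> 'h) \<Rightarrow> 'h \<Rightarrow> real^'d" where
  "cond_mean M Q0 X0 g =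
     (1 / measure M {\<omega> \<in> space M. X0 \<omega> = g}) *\<^sub>R
     (\<integral>\<omega>. indicator {\<omega> \<in> space M. X0 \<omega> = g} \<omega> *\<^sub>R Q0 \<omega> \<partial>M)"

end

theory Submission
  imports Defs
begin

lemma exposure_bounds:
  fixes c :: "'h::finite \<Rightarrow> nat" and q :: "real^'d"
  shows "0 \<le> exposure c q mu g \<and> exposure c q mu g \<le> 1"
proof -
  let ?f = "\<lambda>g. real (c g) * exp ((q \<bullet> mu g) / sqrt (real CARD('d)))"
  have nn: "\<And>g. 0 \<le> ?f g" by simp
  have le: "?f g \<le> sum ?f UNIV" by (rule member_le_sum) (auto intro: nn)
  have "0 \<le> sum ?f UNIV" by (intro sum_nonneg nn)
  moreover have "exposure c q mu g = ?f g / sum ?f UNIV" by (simp add: exposure_def)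
  ultimately show ?thesis using le nn[of g]
  proof (cases "sum ?f UNIV = 0")
    case True
    then show ?thesis by (simp add: exposure_def)
  next
    case False
    with \<open>0 \<le> sum ?f UNIV\<close> have pos: "0 < sum ?f UNIV" by simp
    have "?f g / sum ?f UNIV \<le> 1" using le pos by simp
    moreover have "0 \<le> ?f g / sum ?f UNIV" using pos nn[of g] by simp
    ultimately show ?thesis by (simp add: exposure_def)
  qed
qed

lemma sgd_meas:
  fixes Q :: "nat \<Rightarrow> 'w \<Rightarrow> real^'d" and X :: "nat \<Rightarrow> 'w \<Rightarrow> 'h::finite"
  assumes "\<And>n. Q n \<in> borel_measurable M" "\<And>n. X n \<in> measurable M (count_space UNIV)"
    and "\<And>g. (\<lambda>_. mu0 g) \<in> borel_measurable M"
  shows "(\<lambda>\<omega>. sgd_iter eta c mu0 (\<lambda>n. Q n \<omega>) (\<lambda>n. X n \<omega>) N g) \<in> borel_measurable M"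
proof (induction N arbitrary: g)
  case 0
  then show ?case using assms(3) by simp
next
  case (Suc N)
  note IH = Suc
  have pr: "Measurable.pred M (\<lambda>\<omega>. g = X N \<omega>)"
    using assms(2)[of N] by measurable
  show ?case
    unfolding sgd_iter.simps sgd_step_def exposure_def
    using IH pr assms(1)[of N] by measurable
qed

lemma sgd_bound:
  fixes qs :: "nat \<Rightarrow> real^'d" and xs :: "nat \<Rightarrow> 'h::finite"
  assumes "\<And>n. norm (qs n) \<le> B" "eta \<ge> 0"
  shows "norm (sgd_iter eta c mu0 qs xs N g) \<le> norm (mu0 g) + real N * (eta / sqrt (real CARD('d)) * B)"
proof (induction N arbitrary: g)
  case 0
  then show ?case by simp
next
  case (Suc N)
  let ?m = "sgd_iter eta c mu0 qs xs N"
  let ?s = "sqrt (real CARD('d))"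
  let ?e = "(if g = xs N then 1 else 0) - exposure c (qs N) ?m g"
  have e: "\<bar>?e\<bar> \<le> 1" using exposure_bounds[of c "qs N" ?m g] by auto
  have s: "?s > 0" by simp
  have "norm (eta *\<^sub>R (- ((1 / ?s) * ?e) *\<^sub>R qs N)) = eta * ((1/?s) * \<bar>?e\<bar>) * norm (qs N)"
    using assms(2) s by (simp add: abs_mult)
  also have "\<dots> \<le> eta * ((1/?s) * 1) * B"
    using assms e s by (intro mult_mono mult_left_mono) auto
  finally have b: "norm (eta *\<^sub>R (- ((1 / ?s) * ?e) *\<^sub>R qs N)) \<le> eta / ?s * B" by simp
  have "norm (sgd_iter eta c mu0 qs xs (Suc N) g) \<le> norm (?m g) + norm (eta *\<^sub>R (- ((1 / ?s) * ?e) *\<^sub>R qs N))"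
    unfolding sgd_iter.simps sgd_step_def by (rule norm_triangle_ineq4)
  also have "\<dots> \<le> norm (mu0 g) + real N * (eta / ?s * B) + eta / ?s * B"
    using Suc[of g] b by linarith
  also have "\<dots> = norm (mu0 g) + real (Suc N) * (eta / ?s * B)" by (simp add: algebra_simps add_divide_distrib)
  finally show ?case .
qed


lemma exposure_ratio:
  fixes c :: "'h::finite \<Rightarrow> nat" and q :: "real^'d"
  assumes "\<forall>g. c g \<ge> 1"
  shows "exposure c q mu g / exposure c q mu g' =
     real (c g) / real (c g') * exp ((q \<bullet> mu g - q \<bullet> mu g') / sqrt (real CARD('d)))"
proof -
  let ?f = "\<lambda>g. real (c g) * exp ((q \<bullet> mu g) / sqrt (real CARD('d)))"
  have nn: "\<And>g. 0 \<le> ?f g" by simp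
  have le: "?f g' \<le> sum ?f UNIV" by (rule member_le_sum) (auto intro: nn)
  have "?f g' > 0" using assms by (simp add: Suc_le_eq)
  with le have S: "sum ?f UNIV > 0" by linarith
  have cg: "real (c g') > 0" using assms by (simp add: Suc_le_eq)
  have "exposure c q mu g / exposure c q mu g' = ?f g / ?f g'"
    using S by (simp add: exposure_def)
  also have "\<dots> = real (c g) / real (c g') * exp ((q \<bullet> mu g - q \<bullet> mu g') / sqrt (real CARD('d)))"
    using cg by (simp add: diff_divide_distrib exp_diff)
  finally show ?thesis .
qed

theorem proposition2:
  fixes M :: "'w measure"
    and Q :: "nat \<Rightarrow> 'w \<Rightarrow> real^'d"
    and X :: "nat \<Rightarrow> 'w \<Rightarrow> 'h::finite"
    and hist :: "nat \<Rightarrow> 'h" and T :: nat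
    and eta Bq xi :: real and Nhat :: nat
    and q mu0 :: "real^'d" and r :: "'h \<Rightarrow> real^'d" and h h' :: 'h
  defines "c \<equiv> token_count hist T"
    and "p \<equiv> token_freq hist T"
    and "w \<equiv> cond_mean M (Q 0) (X 0)"
    and "d \<equiv> real CARD('d)"
  defines "wbar \<equiv> (\<Sum>g\<in>UNIV. p g *\<^sub>R w g)"
    and "mu \<equiv> (\<lambda>\<omega>. sgd_iter eta c (\<lambda>_. mu0) (\<lambda>n. Q n \<omega>) (\<lambda>n. X n \<omega>) Nhat)"
  assumes M: "prob_space M"
    and T: "T \<ge> 1"
    and S_nonempty: "\<forall>g. c g \<ge> 1"
    and eta: "eta > 0"
    and indep: "prob_space.indep_vars M (\<lambda>_. borel \<Otimes>\<^sub>M count_space UNIV)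
                  (\<lambda>n \<omega>. (Q n \<omega>, X n \<omega>)) UNIV"
    and ident: "\<forall>n. distr M (borel \<Otimes>\<^sub>M count_space UNIV) (\<lambda>\<omega>. (Q n \<omega>, X n \<omega>))
                   = distr M (borel \<Otimes>\<^sub>M count_space UNIV) (\<lambda>\<omega>. (Q 0 \<omega>, X 0 \<omega>))"
    and bounded: "\<forall>n. AE \<omega> in M. norm (Q n \<omega>) \<le> Bq"
    and probX: "\<forall>n g. measure M {\<omega> \<in> space M. X n \<omega> = g} = p g"
    and Nhat: "Nhat \<ge> 1"
    and xi: "xi \<ge> 0" "norm (r h) \<le> xi" "norm (r h') \<le> xi"
    and mean: "\<forall>g\<in>{h, h'}. (\<integral>\<omega>. mu \<omega> g \<partial>M)
                 = mu0 + (eta * real Nhat * p g / sqrt d) *\<^sub>R (w g - wbar) + r g"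
  shows "(\<integral>\<omega>. exposure c q (mu \<omega>) h / exposure c q (mu \<omega>) h' \<partial>M) / (p h / p h')
         \<ge> exp (eta * real Nhat / d * (q \<bullet> (p h *\<^sub>R (w h - wbar) - p h' *\<^sub>R (w h' - wbar)))
                - 2 * xi * norm q / sqrt d)"
  proof -
  interpret prob_space M by (rule M)
  define s where "s = sqrt d"
  have d1: "d \<ge> 1" unfolding d_def by (simp add: Suc_le_eq)
  have s0: "s > 0" unfolding s_def using d1 by simp
  have ss: "s * s = d" unfolding s_def using d1 by simp
  have sd: "sqrt (real CARD('d)) = s" unfolding s_def d_def ..
  have meas: "\<And>n. (\<lambda>\<omega>. (Q n \<omega>, X n \<omega>)) \<in> M \<rightarrow>\<^sub>M borel \<Otimes>\<^sub>M count_space UNIV"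
    using indep unfolding indep_vars_def by auto
  have QM: "\<And>n. Q n \<in> borel_measurable M"
    using measurable_compose[OF meas measurable_fst] by simp
  have XM: "\<And>n. X n \<in> M \<rightarrow>\<^sub>M count_space UNIV"
    using measurable_compose[OF meas measurable_snd] by simp
  have muM: "\<And>g. (\<lambda>\<omega>. mu \<omega> g) \<in> borel_measurable M"
    unfolding mu_def by (rule sgd_meas[OF QM XM]) simp
  define K where "K = norm mu0 + real Nhat * (eta / s * Bq)"
  have AEQ: "AE \<omega> in M. \<forall>n. norm (Q n \<omega>) \<le> Bq"
    using bounded by (simp add: AE_all_countable)
  have AEmu: "AE \<omega> in M. \<forall>g. norm (mu \<omega> g) \<le> K"
    using AEQ
  proof (rule AE_mp, intro AE_I2 impI allI)
    fix \<omega> g assume "\<forall>n. norm (Q n \<omega>) \<le> Bq"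
    then show "norm (mu \<omega> g) \<le> K"
      unfolding mu_def K_def using sgd_bound[of "\<lambda>n. Q n \<omega>" Bq eta c "\<lambda>_. mu0" "\<lambda>n. X n \<omega>" Nhat g] eta sd
      by simp
  qed
  have intmu: "\<And>g. integrable M (\<lambda>\<omega>. mu \<omega> g)"
  proof -
    fix g
    show "integrable M (\<lambda>\<omega>. mu \<omega> g)"
    proof (rule Bochner_Integration.integrable_bound[OF integrable_const[of K] muM])
      show "AE \<omega> in M. norm (mu \<omega> g) \<le> norm K" using AEmu
      proof eventually_elim
        case (elim \<omega>)
        then have "norm (mu \<omega> g) \<le> K" by blast
        also have "K \<le> norm K" by simp
        finally show ?case .
      qed
    qed
  qed
  define Y where "Y = (\<lambda>\<omega>. (q \<bullet> mu \<omega> h - q \<bullet> mu \<omega> h') / s)"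
  have intY: "integrable M Y" unfolding Y_def using intmu by auto
  have YM: "Y \<in> borel_measurable M" using intY by auto
  have Ybound: "AE \<omega> in M. \<bar>Y \<omega>\<bar> \<le> norm q * (2 * K) / s"
    using AEmu
  proof (rule AE_mp, intro AE_I2 impI)
    fix \<omega> assume b: "\<forall>g. norm (mu \<omega> g) \<le> K"
    have "\<bar>q \<bullet> mu \<omega> h - q \<bullet> mu \<omega> h'\<bar> = \<bar>q \<bullet> (mu \<omega> h - mu \<omega> h')\<bar>"
      by (simp add: inner_diff_right)
    also have "\<dots> \<le> norm q * norm (mu \<omega> h - mu \<omega> h')" by (rule Cauchy_Schwarz_ineq2)
    also have "\<dots> \<le> norm q * (2 * K)"
    proof (rule mult_left_mono)
      have "norm (mu \<omega> h - mu \<omega> h') \<le> norm (mu \<omega> h) + norm (mu \<omega> h')" by (rule norm_triangle_ineq4)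
      then show "norm (mu \<omega> h - mu \<omega> h') \<le> 2 * K" using b[rule_format, of h] b[rule_format, of h'] by linarith
    qed simp
    finally show "\<bar>Y \<omega>\<bar> \<le> norm q * (2 * K) / s"
      unfolding Y_def using s0 by (simp add: divide_right_mono)
  qed
  have intE: "integrable M (\<lambda>\<omega>. exp (Y \<omega>))"
  proof (rule Bochner_Integration.integrable_bound[OF integrable_const[of "exp (norm q * (2 * K) / s)"]])
    show "(\<lambda>\<omega>. exp (Y \<omega>)) \<in> borel_measurable M" using YM by measurable
    show "AE \<omega> in M. norm (exp (Y \<omega>)) \<le> norm (exp (norm q * (2 * K) / s))"
      using Ybound by eventually_elim auto
  qed
  define m where "m = integral\<^sup>L M Y"
  have key: "exp m \<le> (\<integral>\<omega>. exp (Y \<omega>) \<partial>M)"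
  proof -
    have "(\<integral>\<omega>. exp m * (1 + (Y \<omega> - m)) \<partial>M) \<le> (\<integral>\<omega>. exp (Y \<omega>) \<partial>M)"
    proof (rule integral_mono)
      show "integrable M (\<lambda>\<omega>. exp m * (1 + (Y \<omega> - m)))" using intY by auto
      show "integrable M (\<lambda>\<omega>. exp (Y \<omega>))" by (rule intE)
      fix \<omega>
      have "exp (Y \<omega>) = exp m * exp (Y \<omega> - m)" by (simp add: exp_diff)
      moreover have "1 + (Y \<omega> - m) \<le> exp (Y \<omega> - m)" by (rule exp_ge_add_one_self)
      ultimately show "exp m * (1 + (Y \<omega> - m)) \<le> exp (Y \<omega>)" by simp
    qed
    moreover have "(\<integral>\<omega>. exp m * (1 + (Y \<omega> - m)) \<partial>M) = exp m"
      using intY by (simp add: m_def prob_space algebra_simps)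
    ultimately show ?thesis by simp
  qed
  have ratio: "\<And>\<omega>. exposure c q (mu \<omega>) h / exposure c q (mu \<omega>) h' = real (c h) / real (c h') * exp (Y \<omega>)"
    unfolding Y_def using exposure_ratio[OF S_nonempty, where q=q and mu="mu \<omega>" and g=h and g'=h' for \<omega>] unfolding sd by simp
  have ch: "real (c h) > 0" "real (c h') > 0" using S_nonempty by (auto simp: Suc_le_eq)
  have pp: "p h / p h' = real (c h) / real (c h')"
    unfolding p_def c_def token_freq_def using T by simp
  have C: "real (c h) / real (c h') > 0" using ch by simp
  have lhs: "(\<integral>\<omega>. exposure c q (mu \<omega>) h / exposure c q (mu \<omega>) h' \<partial>M) / (p h / p h') = (\<integral>\<omega>. exp (Y \<omega>) \<partial>M)"
    unfolding ratio pp using ch by simp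
  define A where "A g = mu0 + (eta * real Nhat * p g / sqrt d) *\<^sub>R (w g - wbar) + r g" for g
  have m_eq: "m = (q \<bullet> A h - q \<bullet> A h') / s"
    unfolding m_def Y_def A_def using intmu mean by simp
  have eq1: "q \<bullet> A h - q \<bullet> A h' = (eta * real Nhat * p h / s) * (q \<bullet> (w h - wbar))
      - (eta * real Nhat * p h' / s) * (q \<bullet> (w h' - wbar)) + (q \<bullet> r h - q \<bullet> r h')"
    unfolding A_def s_def[symmetric] by (simp add: inner_add_right inner_diff_right)
  have alg: "\<And>x y z. ((eta * real Nhat * p h / s) * x - (eta * real Nhat * p h' / s) * y + z) / s
      = eta * real Nhat / (s * s) * (p h * x - p h' * y) + z / s"
    using s0 by (simp add: field_simps)
  have m_eq2: "m = eta * real Nhat / d * (q \<bullet> (p h *\<^sub>R (w h - wbar) - p h' *\<^sub>R (w h' - wbar)))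
      + (q \<bullet> r h - q \<bullet> r h') / s"
    unfolding m_eq eq1 alg ss by (simp add: inner_diff_right)
  have "\<bar>q \<bullet> r h\<bar> \<le> norm q * xi"
    using Cauchy_Schwarz_ineq2[of q "r h"] xi(2) mult_left_mono[OF xi(2) norm_ge_zero[of q]] by linarith
  moreover have "\<bar>q \<bullet> r h'\<bar> \<le> norm q * xi"
    using Cauchy_Schwarz_ineq2[of q "r h'"] xi(3) mult_left_mono[OF xi(3) norm_ge_zero[of q]] by linarith
  ultimately have "- (2 * xi * norm q) \<le> q \<bullet> r h - q \<bullet> r h'" by (simp add: abs_le_iff algebra_simps)
  then have "- (2 * xi * norm q) / s \<le> (q \<bullet> r h - q \<bullet> r h') / s"
    by (rule divide_right_mono) (use s0 in auto)
  then have "eta * real Nhat / d * (q \<bullet> (p h *\<^sub>R (w h - wbar) - p h' *\<^sub>R (w h' - wbar)))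
                - 2 * xi * norm q / sqrt d \<le> m"
    unfolding m_eq2 s_def by simp
  then have "exp (eta * real Nhat / d * (q \<bullet> (p h *\<^sub>R (w h - wbar) - p h' *\<^sub>R (w h' - wbar)))
                - 2 * xi * norm q / sqrt d) \<le> exp m" by (simp only: exp_le_cancel_iff)
  from order_trans[OF this key] show ?thesis unfolding lhs .
qed

end
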